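(* Impose (A1)–(A6) and (A8), and fix $x\in\mathcal X$, $u\in[0,1]$. Then $\underline{\Delta}(x,u)\le\Delta^{OO}_{Y^*}(x,u)\le\overline{\Delta}(x,u)$, where: (i) under (A7.1): $\underline\Delta(x,u)=\underline y^*-\frac{m_0^Y(x,u)}{m_0^S(x,u)}$ and $\overline\Delta(x,u)=\frac{m_1^Y(x,u)-\underline y^*\Delta_S(x,u)}{m_0^S(x,u)}-\frac{m_0^Y(x,u)}{m_0^S(x,u)}$; (ii) under (A7.2): $\underline\Delta(x,u)=\frac{m_1^Y(x,u)-\overline y^*\Delta_S(x,u)}{m_0^S(x,u)}-\frac{m_0^Y(x,u)}{m_0^S(x,u)}$ and $\overline\Delta(x,u)=\overline y^*-\frac{m_0^Y(x,u)}{m_0^S(x,u)}$; (iii) under (A7.3) (sub-case (a) or (b)): $\underline\Delta(x,u)=\max\left\{\frac{m_1^Y(x,u)-\overline y^*\Delta_S(x,u)}{m_0^S(x,u)},\underline y^*\right\}-\frac{m_0^Y(x,u)}{m_0^S(x,u)}$ and $\overline\Delta(x,u)=\min\left\{\frac{m_1^Y(x,u)-\underline y^*\Delta_S(x,u)}{m_0^S(x,u)},\overline y^*\right\}-\frac{m_0^Y(x,u)}{m_0^S(x,u)}$.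
   Context: Standing setup. On a common probability space: $X$ (covariates, support $\mathcal X$), $Z$ (instrument, support $\mathcal Z$), $W=(X,Z)$; latent real random variables $U,V$, jointly continuously distributed conditional on $X$, with $U\mid X$ and $V\mid X$ each Uniform$[0,1]$ (their joint dependence unrestricted); real potential outcomes of interest $Y_0^*,Y_1^*$. Given functions $P:\mathcal X\times\mathcal Z\to[0,1]$ and $Q:\{0,1\}\times\mathcal X\to[0,1]$, define the treatment $D=\mathbf 1\{P(W)\ge U\}$, potential selection indicators $S_d=\mathbf 1\{Q(d,X)\ge V\}$ ($d\in\{0,1\}$), selection indicator $S=DS_1+(1-D)S_0$, potential observable outcomes $Y_d=S_dY_d^*$ and observable outcome $Y=DY_1+(1-D)Y_0$. For $x\in\mathcal X$, $u\in[0,1]$, $d\in\{0,1\}$: $m_d^Y(x,u)=\mathbb E[Y_d\mid X=x,U=u]$, $m_d^S(x,u)=\mathbb E[S_d\mid X=x,U=u]$, $\Delta_S(x,u)=m_1^S(x,u)-m_0^S(x,u)$, and $\Delta^{OO}_{Y^*}(x,u)=\mathbb E[Y_1^*-Y_0^*\mid X=x,U=u,S_0=1,S_1=1]$. Ratios appearing are assumed well defined (nonzero denominators). Assumptions: (A1) $Z$ is independent of $(U,V,Y_0^*,Y_1^* )$ conditional on $X$; (A2) the distribution of $P(W)$ given $X$ is nondegenerate; (A3) $\mathbb E|Y_d^*|<\infty$ and $\mathbb E[(Y_d^* )^2]<\infty$ for $d=0,1$; (A4) $0<\mathbb P[D=1\mid X]<1$; (A5) $X$ is invariant to counterfactual manipulation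 of treatment; (A6) $Y_0^*$ and $Y_1^*$ have a common support $\mathcal Y^*\subseteq\mathbb R$; write $\underline y^*=\inf\mathcal Y^*\in\mathbb R\cup\{-\infty\}$ and $\overline y^*=\sup\mathcal Y^*\in\mathbb R\cup\{+\infty\}$, assumed known. Support cases: (A7.1) $\underline y^*>-\infty$, $\overline y^*=+\infty$, $\mathcal Y^*$ an interval; (A7.2) $\underline y^*=-\infty$, $\overline y^*<\infty$, $\mathcal Y^*$ an interval; (A7.3) $\underline y^*,\overline y^*$ both finite and either (a) $\mathcal Y^*$ is an interval or (b) $\underline y^*\in\mathcal Y^*$ and $\overline y^*\in\mathcal Y^*$. (A8) $Q(1,x)>Q(0,x)>0$ for all $x\in\mathcal X$. *)

theory Defs
  imports "HOL-Probability.Probability"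
begin

definition condE :: "'a measure \<Rightarrow> ('a \<Rightarrow> 'x) \<Rightarrow> 'x measure \<Rightarrow> ('a \<Rightarrow> real) \<Rightarrow> 'a \<Rightarrow> real" where
  "condE M X SX f = real_cond_exp M (vimage_algebra (space M) X SX) f"

definition condP :: "'a measure \<Rightarrow> ('a \<Rightarrow> 'x) \<Rightarrow> 'x measure \<Rightarrow> 'a set \<Rightarrow> 'a \<Rightarrow> real" where
  "condP M X SX A = condE M X SX (indicator A)"

definition cond_indep_given ::
  "'a measure \<Rightarrow> ('a \<Rightarrow> 'x) \<Rightarrow> 'x measure \<Rightarrow> ('a \<Rightarrow> 'z) \<Rightarrow> 'z measure
    \<Rightarrow> ('a \<Rightarrow> 'w) \<Rightarrow> 'w measure \<Rightarrow> bool" where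
  "cond_indep_given M X SX Z SZ W SW \<longleftrightarrow>
     (\<forall>A\<in>sets SZ. \<forall>B\<in>sets SW. AE \<omega> in M.
        condP M X SX ({\<omega>\<in>space M. Z \<omega> \<in> A} \<inter> {\<omega>\<in>space M. W \<omega> \<in> B}) \<omega>
        = condP M X SX {\<omega>\<in>space M. Z \<omega> \<in> A} \<omega> * condP M X SX {\<omega>\<in>space M. W \<omega> \<in> B} \<omega>)"

definition cond_nondegenerate :: "'a measure \<Rightarrow> ('a \<Rightarrow> 'x) \<Rightarrow> 'x measure \<Rightarrow> ('a \<Rightarrow> real) \<Rightarrow> bool" where
  "cond_nondegenerate M X SX R \<longleftrightarrow>
     (AE \<omega> in M. condE M X SX (\<lambda>\<omega>'. (R \<omega>' - condE M X SX R \<omega>')\<^sup>2) \<omega> > 0)"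

definition cond_uniform01 :: "'a measure \<Rightarrow> ('a \<Rightarrow> 'x) \<Rightarrow> 'x measure \<Rightarrow> ('a \<Rightarrow> real) \<Rightarrow> bool" where
  "cond_uniform01 M X SX R \<longleftrightarrow>
     (\<forall>t\<in>{0..1}. AE \<omega> in M. condP M X SX {\<omega>\<in>space M. R \<omega> \<le> t} \<omega> = t)"

definition cond_jointly_continuous ::
  "'a measure \<Rightarrow> ('a \<Rightarrow> 'x) \<Rightarrow> 'x measure \<Rightarrow> ('a \<Rightarrow> real) \<Rightarrow> ('a \<Rightarrow> real) \<Rightarrow> bool" where
  "cond_jointly_continuous M X SX U V \<longleftrightarrow>
     (\<forall>N\<in>null_sets (lborel :: (real \<times> real) measure).
        AE \<omega> in M. condP M X SX {\<omega>\<in>space M. (U \<omega>, V \<omega>) \<in> N} \<omega> = 0)"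

definition rv_support :: "'a measure \<Rightarrow> ('a \<Rightarrow> real) \<Rightarrow> real set" where
  "rv_support M Y = {y. \<forall>e>0. measure M {\<omega>\<in>space M. \<bar>Y \<omega> - y\<bar> < e} > 0}"

definition is_rcd :: "'a measure \<Rightarrow> ('a \<Rightarrow> 'x) \<Rightarrow> 'x measure \<Rightarrow> ('a \<Rightarrow> real)
    \<Rightarrow> ('x \<Rightarrow> real \<Rightarrow> 'a measure) \<Rightarrow> bool" where
  "is_rcd M X SX U K \<longleftrightarrow>
     (\<forall>x u. sets (K x u) = sets M \<and> prob_space (K x u)) \<and>
     (\<forall>A\<in>sets M. (\<lambda>(x, u). measure (K x u) A) \<in> borel_measurable (SX \<Otimes>\<^sub>M borel)) \<and>
     (\<forall>A\<in>sets M. \<forall>B\<in>sets (SX \<Otimes>\<^sub>M borel).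
        measure M ({\<omega>\<in>space M. (X \<omega>, U \<omega>) \<in> B} \<inter> A)
        = (\<integral>\<omega>. indicator B (X \<omega>, U \<omega>) * measure (K (X \<omega>) (U \<omega>)) A \<partial>M))"

definition Ssel :: "(nat \<Rightarrow> 'x \<Rightarrow> real) \<Rightarrow> ('a \<Rightarrow> 'x) \<Rightarrow> ('a \<Rightarrow> real) \<Rightarrow> nat \<Rightarrow> 'a \<Rightarrow> real" where
  "Ssel Q X V d \<omega> = (if V \<omega> \<le> Q d (X \<omega>) then 1 else 0)"

definition Dtr :: "('x \<Rightarrow> 'z \<Rightarrow> real) \<Rightarrow> ('a \<Rightarrow> 'x) \<Rightarrow> ('a \<Rightarrow> 'z) \<Rightarrow> ('a \<Rightarrow> real) \<Rightarrow> 'a \<Rightarrow> real" where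
  "Dtr P X Z U \<omega> = (if U \<omega> \<le> P (X \<omega>) (Z \<omega>) then 1 else 0)"

text \<open>m_d^Y(x,u) = E[Y_d | X=x,U=u] with Y_d = S_d Y_d^*.\<close>
definition mY :: "('x \<Rightarrow> real \<Rightarrow> 'a measure) \<Rightarrow> (nat \<Rightarrow> 'x \<Rightarrow> real) \<Rightarrow> ('a \<Rightarrow> 'x) \<Rightarrow> ('a \<Rightarrow> real)
    \<Rightarrow> nat \<Rightarrow> ('a \<Rightarrow> real) \<Rightarrow> 'x \<Rightarrow> real \<Rightarrow> real" where
  "mY K Q X V d Ystar_d x u = (\<integral>\<omega>. Ssel Q X V d \<omega> * Ystar_d \<omega> \<partial>(K x u))"

definition mS :: "('x \<Rightarrow> real \<Rightarrow> 'a measure) \<Rightarrow> (nat \<Rightarrow> 'x \<Rightarrow> real) \<Rightarrow> ('a \<Rightarrow> 'x) \<Rightarrow> ('a \<Rightarrow> real)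
    \<Rightarrow> nat \<Rightarrow> 'x \<Rightarrow> real \<Rightarrow> real" where
  "mS K Q X V d x u = (\<integral>\<omega>. Ssel Q X V d \<omega> \<partial>(K x u))"

definition pOO :: "('x \<Rightarrow> real \<Rightarrow> 'a measure) \<Rightarrow> (nat \<Rightarrow> 'x \<Rightarrow> real) \<Rightarrow> ('a \<Rightarrow> 'x) \<Rightarrow> ('a \<Rightarrow> real)
    \<Rightarrow> 'x \<Rightarrow> real \<Rightarrow> real" where
  "pOO K Q X V x u = (\<integral>\<omega>. Ssel Q X V 0 \<omega> * Ssel Q X V 1 \<omega> \<partial>(K x u))"

definition DeltaOO :: "('x \<Rightarrow> real \<Rightarrow> 'a measure) \<Rightarrow> (nat \<Rightarrow> 'x \<Rightarrow> real) \<Rightarrow> ('a \<Rightarrow> 'x) \<Rightarrow> ('a \<Rightarrow> real)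
    \<Rightarrow> ('a \<Rightarrow> real) \<Rightarrow> ('a \<Rightarrow> real) \<Rightarrow> 'x \<Rightarrow> real \<Rightarrow> real" where
  "DeltaOO K Q X V Y0s Y1s x u =
     (\<integral>\<omega>. (Y1s \<omega> - Y0s \<omega>) * Ssel Q X V 0 \<omega> * Ssel Q X V 1 \<omega> \<partial>(K x u)) / pOO K Q X V x u"

end

theory Submission imports Defs begin

context prob_space begin

lemma supp_exists:
  assumes Y[measurable]: "Y \<in> borel_measurable M"
    and at: "measure M {\<omega>\<in>space M. a \<le> Y \<omega> \<and> Y \<omega> \<le> t} > 0"
  shows "\<exists>y. a \<le> y \<and> y \<le> t \<and> y \<in> rv_support M Y"
proof -
  define G where "G s = measure M {\<omega>\<in>space M. a \<le> Y \<omega> \<and> Y \<omega> \<le> s}" for s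
  define S where "S = {s. 0 < G s}"
  have mono: "G s \<le> G s'" if "s \<le> s'" for s s'
    unfolding G_def using that by (intro finite_measure_mono) auto
  have tS: "t \<in> S" using at by (simp add: S_def G_def)
  have Sa: "a \<le> s" if "s \<in> S" for s
  proof (rule ccontr)
    assume "\<not> a \<le> s"
    then have "{\<omega>\<in>space M. a \<le> Y \<omega> \<and> Y \<omega> \<le> s} = {}" by auto
    then have "G s = 0" unfolding G_def by (simp only: measure_empty)
    then show False using that by (simp add: S_def)
  qed
  have bdd: "bdd_below S" using Sa by (rule bdd_belowI)
  define y0 where "y0 = Inf S"
  have "a \<le> y0" unfolding y0_def using tS Sa by (auto intro!: cInf_greatest)
  moreover have "y0 \<le> t" unfolding y0_def using tS bdd by (rule cInf_lower)
  moreover have "y0 \<in> rv_support M Y"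
    unfolding rv_support_def
  proof (intro CollectI allI impI)
    fix e :: real assume e: "e > 0"
    have "Inf S < y0 + e/2" using e y0_def by simp
    then obtain s where s: "s \<in> S" "s < y0 + e/2" using tS bdd by (metis cInf_less_iff empty_iff)
    have pos: "0 < G (y0 + e/2)" using s mono[of s "y0 + e/2"] by (auto simp: S_def)
    have zero: "G (y0 - e/2) \<le> 0"
    proof (rule ccontr)
      assume "\<not> G (y0 - e/2) \<le> 0"
      then have "y0 - e/2 \<in> S" by (simp add: S_def)
      then have "y0 \<le> y0 - e/2" unfolding y0_def using bdd by (rule cInf_lower)
      then show False using e by simp
    qed
    have sub: "{\<omega>\<in>space M. a \<le> Y \<omega> \<and> Y \<omega> \<le> y0 + e/2} \<subseteq>
       {\<omega>\<in>space M. a \<le> Y \<omega> \<and> Y \<omega> \<le> y0 - e/2} \<union> {\<omega>\<in>space M. \<bar>Y \<omega> - y0\<bar> < e}"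
      using e by auto
    have "G (y0 + e/2) \<le> measure M ({\<omega>\<in>space M. a \<le> Y \<omega> \<and> Y \<omega> \<le> y0 - e/2} \<union> {\<omega>\<in>space M. \<bar>Y \<omega> - y0\<bar> < e})"
      unfolding G_def using sub by (intro finite_measure_mono) auto
    also have "\<dots> \<le> G (y0 - e/2) + measure M {\<omega>\<in>space M. \<bar>Y \<omega> - y0\<bar> < e}"
      unfolding G_def by (intro measure_Un_le) auto
    finally show "measure M {\<omega>\<in>space M. \<bar>Y \<omega> - y0\<bar> < e} > 0" using pos zero by simp
  qed
  ultimately show ?thesis by blast
qed

lemma supp_lower:
  assumes Y[measurable]: "Y \<in> borel_measurable M" and bdd: "bdd_below (rv_support M Y)"
  shows "AE \<omega> in M. Inf (rv_support M Y) \<le> Y \<omega>"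
proof -
  define c where "c = Inf (rv_support M Y)"
  have null: "measure M {\<omega>\<in>space M. a \<le> Y \<omega> \<and> Y \<omega> \<le> t} = 0" if "t < c" for a t
  proof (rule ccontr)
    assume "measure M {\<omega>\<in>space M. a \<le> Y \<omega> \<and> Y \<omega> \<le> t} \<noteq> 0"
    then have "measure M {\<omega>\<in>space M. a \<le> Y \<omega> \<and> Y \<omega> \<le> t} > 0"
      using measure_nonneg[of M] by (simp add: order_less_le)
    then obtain y where "y \<le> t" "y \<in> rv_support M Y" using supp_exists Y by blast
    then have "c \<le> y" unfolding c_def using bdd by (intro cInf_lower)
    then show False using that \<open>y \<le> t\<close> by simp
  qed
  have ae: "AE \<omega> in M. \<not> (a \<le> Y \<omega> \<and> Y \<omega> \<le> t)" if "t < c" for a t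
    using null[OF that, of a]
    by (subst AE_iff_measurable[of "{\<omega>\<in>space M. a \<le> Y \<omega> \<and> Y \<omega> \<le> t}"])
       (auto simp: emeasure_eq_measure)
  have "AE \<omega> in M. \<forall>k::nat. \<forall>n::nat. \<not> (c - 1 / Suc k - real n \<le> Y \<omega> \<and> Y \<omega> \<le> c - 1 / Suc k)"
    by (intro AE_all_countable[THEN iffD2] allI ae) simp
  then show ?thesis
  proof (eventually_elim)
    case (elim \<omega>)
    show "Inf (rv_support M Y) \<le> Y \<omega>"
    proof (rule ccontr)
      assume "\<not> Inf (rv_support M Y) \<le> Y \<omega>"
      then have lt: "Y \<omega> < c" by (simp add: c_def)
      obtain k :: nat where k: "1 / Suc k < c - Y \<omega>"
        using lt reals_Archimedean[of "c - Y \<omega>"] by (auto simp: inverse_eq_divide)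
      obtain n :: nat where n: "c - 1 / Suc k - Y \<omega> \<le> real n" using real_arch_simple by blast
      show False using elim[rule_format, of k n] k n by simp
    qed
  qed
qed

lemma supp_upper:
  assumes Y[measurable]: "Y \<in> borel_measurable M" and bdd: "bdd_above (rv_support M Y)"
  shows "AE \<omega> in M. Y \<omega> \<le> Sup (rv_support M Y)"
proof -
  have eq: "rv_support M (\<lambda>\<omega>. - Y \<omega>) = uminus ` rv_support M Y"
    unfolding rv_support_def
  proof (intro set_eqI iffI)
    fix y assume "y \<in> {y. \<forall>e>0. 0 < measure M {\<omega> \<in> space M. \<bar>- Y \<omega> - y\<bar> < e}}"
    moreover have "\<And>\<omega>. \<bar>- Y \<omega> - y\<bar> = \<bar>Y \<omega> - (- y)\<bar>" by arith
    ultimately have "- y \<in> {y. \<forall>e>0. 0 < measure M {\<omega> \<in> space M. \<bar>Y \<omega> - y\<bar> < e}}"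
      by simp
    then show "y \<in> uminus ` {y. \<forall>e>0. 0 < measure M {\<omega> \<in> space M. \<bar>Y \<omega> - y\<bar> < e}}"
      by (metis (no_types, lifting) image_eqI minus_minus)
  next
    fix y assume "y \<in> uminus ` {y. \<forall>e>0. 0 < measure M {\<omega> \<in> space M. \<bar>Y \<omega> - y\<bar> < e}}"
    moreover have "\<And>\<omega>. \<bar>- Y \<omega> - y\<bar> = \<bar>Y \<omega> - (- y)\<bar>" by arith
    ultimately show "y \<in> {y. \<forall>e>0. 0 < measure M {\<omega> \<in> space M. \<bar>- Y \<omega> - y\<bar> < e}}"
      by auto
  qed
  have "AE \<omega> in M. Inf (rv_support M (\<lambda>\<omega>. - Y \<omega>)) \<le> - Y \<omega>"
    using bdd by (intro supp_lower) (auto simp: eq)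
  moreover have "Inf (uminus ` rv_support M Y) = - Sup (rv_support M Y)"
  proof (cases "rv_support M Y = {}")
    case True then show ?thesis by (simp add: Inf_real_def Sup_real_def)
  next
    case False
    then show ?thesis using uminus_cSUP[of "\<lambda>x. x" "rv_support M Y"] bdd by simp
  qed
  ultimately show ?thesis by (simp add: eq)
qed

end

lemma kernel_meas:
  assumes M: "prob_space M" and X: "X \<in> measurable M SX" and U: "U \<in> borel_measurable M"
    and K: "is_rcd M X SX U K"
  shows "(\<lambda>\<omega>. K (X \<omega>) (U \<omega>)) \<in> measurable M (subprob_algebra M)"
    and "M \<bind> (\<lambda>\<omega>. K (X \<omega>) (U \<omega>)) = M"
proof -
  define \<kappa> where "\<kappa> = (\<lambda>\<omega>. K (X \<omega>) (U \<omega>))"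
  have XU: "(\<lambda>\<omega>. (X \<omega>, U \<omega>)) \<in> measurable M (SX \<Otimes>\<^sub>M borel)"
    using X U by (rule measurable_Pair)
  have sets: "sets (\<kappa> \<omega>) = sets M" and ps: "prob_space (\<kappa> \<omega>)" for \<omega>
    using K unfolding is_rcd_def \<kappa>_def by auto
  have mm: "(\<lambda>\<omega>. measure (\<kappa> \<omega>) A) \<in> borel_measurable M" if A: "A \<in> sets M" for A
  proof -
    have "(\<lambda>(x, u). measure (K x u) A) \<in> borel_measurable (SX \<Otimes>\<^sub>M borel)"
      using K A unfolding is_rcd_def by auto
    from measurable_compose[OF XU this] show ?thesis by (simp add: \<kappa>_def)
  qed
  have em: "emeasure (\<kappa> \<omega>) A = ennreal (measure (\<kappa> \<omega>) A)" for \<omega> A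
    using ps[of \<omega>] by (simp add: finite_measure.emeasure_eq_measure[OF prob_space.axioms(1)])
  show meas: "(\<lambda>\<omega>. K (X \<omega>) (U \<omega>)) \<in> measurable M (subprob_algebra M)"
    unfolding \<kappa>_def[symmetric]
  proof (rule measurable_subprob_algebra)
    fix a show "subprob_space (\<kappa> a)" using ps[of a] by (simp add: prob_space_imp_subprob_space)
    show "sets (\<kappa> a) = sets M" by (rule sets)
  next
    fix A assume "A \<in> sets M"
    then show "(\<lambda>a. emeasure (\<kappa> a) A) \<in> borel_measurable M"
      unfolding em using mm by measurable
  qed
  have ne: "space M \<noteq> {}" using M by (simp add: prob_space.not_empty)
  show "M \<bind> (\<lambda>\<omega>. K (X \<omega>) (U \<omega>)) = M"
    unfolding \<kappa>_def[symmetric]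
  proof (rule measure_eqI)
    show "sets (M \<bind> \<kappa>) = sets M" using sets ne by (rule sets_bind)
    fix A assume A: "A \<in> sets (M \<bind> \<kappa>)"
    then have A': "A \<in> sets M" using sets ne by simp
    have "emeasure (M \<bind> \<kappa>) A = (\<integral>\<^sup>+\<omega>. emeasure (\<kappa> \<omega>) A \<partial>M)"
      using ne meas A' by (simp add: emeasure_bind \<kappa>_def)
    also have "\<dots> = (\<integral>\<^sup>+\<omega>. ennreal (measure (\<kappa> \<omega>) A) \<partial>M)" by (simp add: em)
    also have "\<dots> = ennreal (\<integral>\<omega>. measure (\<kappa> \<omega>) A \<partial>M)"
    proof (rule nn_integral_eq_integral)
      show "integrable M (\<lambda>\<omega>. measure (\<kappa> \<omega>) A)"
        using M mm[OF A'] ps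
        by (intro finite_measure.integrable_const_bound[OF prob_space.axioms(1), where B=1]) (auto simp: prob_space.prob_le_1)
    qed simp
    also have "(\<integral>\<omega>. measure (\<kappa> \<omega>) A \<partial>M) = measure M A"
    proof -
      have "space (SX \<Otimes>\<^sub>M borel) \<in> sets (SX \<Otimes>\<^sub>M borel)" by simp
      then have "measure M ({\<omega>\<in>space M. (X \<omega>, U \<omega>) \<in> space (SX \<Otimes>\<^sub>M borel)} \<inter> A)
          = (\<integral>\<omega>. indicator (space (SX \<Otimes>\<^sub>M borel)) (X \<omega>, U \<omega>) * measure (\<kappa> \<omega>) A \<partial>M)"
        using K A' unfolding is_rcd_def \<kappa>_def by blast
      moreover have "{\<omega>\<in>space M. (X \<omega>, U \<omega>) \<in> space (SX \<Otimes>\<^sub>M borel)} \<inter> A = A"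
        using measurable_space[OF XU] sets.sets_into_space[OF A'] by auto
      moreover have "(\<integral>\<omega>. indicator (space (SX \<Otimes>\<^sub>M borel)) (X \<omega>, U \<omega>) * measure (\<kappa> \<omega>) A \<partial>M)
          = (\<integral>\<omega>. measure (\<kappa> \<omega>) A \<partial>M)"
        using measurable_space[OF XU] by (intro Bochner_Integration.integral_cong) auto
      ultimately show ?thesis by simp
    qed
    also have "ennreal (measure M A) = emeasure M A"
      using M by (simp add: finite_measure.emeasure_eq_measure[OF prob_space.axioms(1)])
    finally show "emeasure (M \<bind> \<kappa>) A = emeasure M A" .
  qed
qed

lemma kernel_AE:
  assumes M: "prob_space M" and X: "X \<in> measurable M SX" and U: "U \<in> borel_measurable M"
    and K: "is_rcd M X SX U K"
    and P: "Measurable.pred M P" and ae: "AE \<omega> in M. P \<omega>"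
  shows "AE \<omega> in M. AE \<omega>' in K (X \<omega>) (U \<omega>). P \<omega>'"
proof -
  note km = kernel_meas[OF M X U K]
  have "AE \<omega> in M \<bind> (\<lambda>\<omega>. K (X \<omega>) (U \<omega>)). P \<omega>" by (subst km(2)) (rule ae)
  then show ?thesis using AE_bind[OF km(1) P] by simp
qed

lemma kernel_integrable:
  fixes f :: "'a \<Rightarrow> real"
  assumes M: "prob_space M" and X: "X \<in> measurable M SX" and U: "U \<in> borel_measurable M"
    and K: "is_rcd M X SX U K"
    and f: "integrable M f"
  shows "AE \<omega> in M. integrable (K (X \<omega>) (U \<omega>)) f"
proof -
  note km = kernel_meas[OF M X U K]
  have fm: "f \<in> borel_measurable M" using f by simp
  have sets: "sets (K (X \<omega>) (U \<omega>)) = sets M" for \<omega>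
    using K unfolding is_rcd_def by auto
  have nm: "(\<lambda>x. ennreal (norm (f x))) \<in> borel_measurable M" using fm by measurable
  have "(\<integral>\<^sup>+x. ennreal (norm (f x)) \<partial>M) < \<infinity>" using f by (simp add: integrable_iff_bounded)
  also have "(\<integral>\<^sup>+x. ennreal (norm (f x)) \<partial>M) = (\<integral>\<^sup>+\<omega>. \<integral>\<^sup>+y. ennreal (norm (f y)) \<partial>K (X \<omega>) (U \<omega>) \<partial>M)"
    using nn_integral_bind[OF nm km(1)] km(2) by simp
  finally have fin: "(\<integral>\<^sup>+\<omega>. \<integral>\<^sup>+y. ennreal (norm (f y)) \<partial>K (X \<omega>) (U \<omega>) \<partial>M) \<noteq> \<infinity>" by simp
  have mm: "(\<lambda>\<omega>. \<integral>\<^sup>+y. ennreal (norm (f y)) \<partial>K (X \<omega>) (U \<omega>)) \<in> borel_measurable M"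
    using measurable_compose[OF km(1) nn_integral_measurable_subprob_algebra[OF nm]] by simp
  have "AE \<omega> in M. (\<integral>\<^sup>+y. ennreal (norm (f y)) \<partial>K (X \<omega>) (U \<omega>)) \<noteq> \<infinity>"
    using mm fin by (rule nn_integral_PInf_AE)
  then show ?thesis
  proof (eventually_elim)
    case (elim \<omega>)
    have "f \<in> borel_measurable (K (X \<omega>) (U \<omega>))"
      using fm by (simp add: measurable_cong_sets[OF sets refl])
    then show ?case using elim by (simp add: integrable_iff_bounded top.not_eq_extremum)
  qed
qed


lemma pointwise:
  fixes N :: "'a measure" and s0 s1 Y0 Y1 :: "'a \<Rightarrow> real"
  assumes N: "prob_space N"
    and m[measurable]: "s0 \<in> borel_measurable N" "s1 \<in> borel_measurable N"
      "Y0 \<in> borel_measurable N" "Y1 \<in> borel_measurable N"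
    and i: "integrable N Y0" "integrable N Y1"
    and s01: "\<forall>\<omega>\<in>space N. s0 \<omega> \<in> {0,1} \<and> s1 \<omega> \<in> {0,1} \<and> s0 \<omega> \<le> s1 \<omega>"
  shows "(\<integral>\<omega>. (Y1 \<omega> - Y0 \<omega>) * s0 \<omega> * s1 \<omega> \<partial>N) = (\<integral>\<omega>. s0 \<omega> * Y1 \<omega> \<partial>N) - (\<integral>\<omega>. s0 \<omega> * Y0 \<omega> \<partial>N)"
    and "(\<integral>\<omega>. s0 \<omega> * s1 \<omega> \<partial>N) = (\<integral>\<omega>. s0 \<omega> \<partial>N)"
    and "0 \<le> (\<integral>\<omega>. s0 \<omega> \<partial>N)"
    and "(AE \<omega> in N. c \<le> Y1 \<omega>) \<Longrightarrow> c * (\<integral>\<omega>. s0 \<omega> \<partial>N) \<le> (\<integral>\<omega>. s0 \<omega> * Y1 \<omega> \<partial>N) \<and>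
        (\<integral>\<omega>. s0 \<omega> * Y1 \<omega> \<partial>N) \<le> (\<integral>\<omega>. s1 \<omega> * Y1 \<omega> \<partial>N) - c * ((\<integral>\<omega>. s1 \<omega> \<partial>N) - (\<integral>\<omega>. s0 \<omega> \<partial>N))"
    and "(AE \<omega> in N. Y1 \<omega> \<le> C) \<Longrightarrow> (\<integral>\<omega>. s0 \<omega> * Y1 \<omega> \<partial>N) \<le> C * (\<integral>\<omega>. s0 \<omega> \<partial>N) \<and>
        (\<integral>\<omega>. s1 \<omega> * Y1 \<omega> \<partial>N) - C * ((\<integral>\<omega>. s1 \<omega> \<partial>N) - (\<integral>\<omega>. s0 \<omega> \<partial>N)) \<le> (\<integral>\<omega>. s0 \<omega> * Y1 \<omega> \<partial>N)"
proof -
  interpret prob_space N by (rule N)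
  have bnd: "integrable N (\<lambda>\<omega>. s \<omega> * Y \<omega>)"
    if "s \<in> borel_measurable N" "integrable N Y" "\<forall>\<omega>\<in>space N. s \<omega> \<in> {0,1}" for s Y :: "'a \<Rightarrow> real"
  proof (rule Bochner_Integration.integrable_bound[OF that(2)])
    have "Y \<in> borel_measurable N" using that(2) by simp
    then show "(\<lambda>\<omega>. s \<omega> * Y \<omega>) \<in> borel_measurable N" using that(1) by measurable
    show "AE \<omega> in N. norm (s \<omega> * Y \<omega>) \<le> norm (Y \<omega>)"
      using that(3) by (intro AE_I2) (auto simp: abs_mult)
  qed
  have is0: "integrable N s0" and is1: "integrable N s1"
    using s01 by (auto intro!: integrable_const_bound[where B=1] AE_I2)
  have i01: "integrable N (\<lambda>\<omega>. s0 \<omega> * Y0 \<omega>)" "integrable N (\<lambda>\<omega>. s0 \<omega> * Y1 \<omega>)"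
    "integrable N (\<lambda>\<omega>. s1 \<omega> * Y1 \<omega>)"
    using bnd m i s01 by auto
  have "(\<integral>\<omega>. (Y1 \<omega> - Y0 \<omega>) * s0 \<omega> * s1 \<omega> \<partial>N) = (\<integral>\<omega>. s0 \<omega> * Y1 \<omega> - s0 \<omega> * Y0 \<omega> \<partial>N)"
    using s01 by (intro Bochner_Integration.integral_cong) (auto simp: algebra_simps)
  also have "\<dots> = (\<integral>\<omega>. s0 \<omega> * Y1 \<omega> \<partial>N) - (\<integral>\<omega>. s0 \<omega> * Y0 \<omega> \<partial>N)"
    using i01 by (simp add: Bochner_Integration.integral_diff)
  finally show "(\<integral>\<omega>. (Y1 \<omega> - Y0 \<omega>) * s0 \<omega> * s1 \<omega> \<partial>N) = (\<integral>\<omega>. s0 \<omega> * Y1 \<omega> \<partial>N) - (\<integral>\<omega>. s0 \<omega> * Y0 \<omega> \<partial>N)" .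
  show "(\<integral>\<omega>. s0 \<omega> * s1 \<omega> \<partial>N) = (\<integral>\<omega>. s0 \<omega> \<partial>N)"
    using s01 by (intro Bochner_Integration.integral_cong) auto
  show "0 \<le> (\<integral>\<omega>. s0 \<omega> \<partial>N)"
    using s01 by (intro integral_nonneg_AE AE_I2) auto
  have d1: "(\<integral>\<omega>. s1 \<omega> * Y1 \<omega> \<partial>N) - (\<integral>\<omega>. s0 \<omega> * Y1 \<omega> \<partial>N) = (\<integral>\<omega>. (s1 \<omega> - s0 \<omega>) * Y1 \<omega> \<partial>N)"
    using i01 by (subst Bochner_Integration.integral_diff[symmetric]) (auto simp: algebra_simps)
  have d2: "(\<integral>\<omega>. s1 \<omega> \<partial>N) - (\<integral>\<omega>. s0 \<omega> \<partial>N) = (\<integral>\<omega>. s1 \<omega> - s0 \<omega> \<partial>N)"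
    using is0 is1 by (simp add: Bochner_Integration.integral_diff)
  have idf: "integrable N (\<lambda>\<omega>. (s1 \<omega> - s0 \<omega>) * Y1 \<omega>)"
    using i01 by (simp add: algebra_simps)
  show "(AE \<omega> in N. c \<le> Y1 \<omega>) \<Longrightarrow> c * (\<integral>\<omega>. s0 \<omega> \<partial>N) \<le> (\<integral>\<omega>. s0 \<omega> * Y1 \<omega> \<partial>N) \<and>
        (\<integral>\<omega>. s0 \<omega> * Y1 \<omega> \<partial>N) \<le> (\<integral>\<omega>. s1 \<omega> * Y1 \<omega> \<partial>N) - c * ((\<integral>\<omega>. s1 \<omega> \<partial>N) - (\<integral>\<omega>. s0 \<omega> \<partial>N))"
  proof
    assume ae: "AE \<omega> in N. c \<le> Y1 \<omega>"
    have "(\<integral>\<omega>. c * s0 \<omega> \<partial>N) \<le> (\<integral>\<omega>. s0 \<omega> * Y1 \<omega> \<partial>N)"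
      using is0 i01 ae s01
    proof (intro integral_mono_AE)
      show "AE \<omega> in N. c * s0 \<omega> \<le> s0 \<omega> * Y1 \<omega>" using ae AE_space
      proof eventually_elim
        case (elim \<omega>) then have "s0 \<omega> \<in> {0,1}" "s1 \<omega> \<in> {0,1}" "s0 \<omega> \<le> s1 \<omega>" using s01 by auto
        then show ?case using elim by auto
      qed
    qed auto
    then show "c * (\<integral>\<omega>. s0 \<omega> \<partial>N) \<le> (\<integral>\<omega>. s0 \<omega> * Y1 \<omega> \<partial>N)" by simp
    have "(\<integral>\<omega>. c * (s1 \<omega> - s0 \<omega>) \<partial>N) \<le> (\<integral>\<omega>. (s1 \<omega> - s0 \<omega>) * Y1 \<omega> \<partial>N)"
      using is0 is1 idf ae s01
    proof (intro integral_mono_AE)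
      show "AE \<omega> in N. c * (s1 \<omega> - s0 \<omega>) \<le> (s1 \<omega> - s0 \<omega>) * Y1 \<omega>" using ae AE_space
      proof eventually_elim
        case (elim \<omega>) then have "s0 \<omega> \<in> {0,1}" "s1 \<omega> \<in> {0,1}" "s0 \<omega> \<le> s1 \<omega>" using s01 by auto
        then show ?case using elim by auto
      qed
    qed auto
    then show "(\<integral>\<omega>. s0 \<omega> * Y1 \<omega> \<partial>N) \<le> (\<integral>\<omega>. s1 \<omega> * Y1 \<omega> \<partial>N) - c * ((\<integral>\<omega>. s1 \<omega> \<partial>N) - (\<integral>\<omega>. s0 \<omega> \<partial>N))"
      using d1 d2 by simp
  qed
  show "(AE \<omega> in N. Y1 \<omega> \<le> C) \<Longrightarrow> (\<integral>\<omega>. s0 \<omega> * Y1 \<omega> \<partial>N) \<le> C * (\<integral>\<omega>. s0 \<omega> \<partial>N) \<and>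
        (\<integral>\<omega>. s1 \<omega> * Y1 \<omega> \<partial>N) - C * ((\<integral>\<omega>. s1 \<omega> \<partial>N) - (\<integral>\<omega>. s0 \<omega> \<partial>N)) \<le> (\<integral>\<omega>. s0 \<omega> * Y1 \<omega> \<partial>N)"
  proof
    assume ae: "AE \<omega> in N. Y1 \<omega> \<le> C"
    have "(\<integral>\<omega>. s0 \<omega> * Y1 \<omega> \<partial>N) \<le> (\<integral>\<omega>. C * s0 \<omega> \<partial>N)"
      using is0 i01 ae s01
    proof (intro integral_mono_AE)
      show "AE \<omega> in N. s0 \<omega> * Y1 \<omega> \<le> C * s0 \<omega>" using ae AE_space
      proof eventually_elim
        case (elim \<omega>) then have "s0 \<omega> \<in> {0,1}" "s1 \<omega> \<in> {0,1}" "s0 \<omega> \<le> s1 \<omega>" using s01 by auto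
        then show ?case using elim by auto
      qed
    qed auto
    then show "(\<integral>\<omega>. s0 \<omega> * Y1 \<omega> \<partial>N) \<le> C * (\<integral>\<omega>. s0 \<omega> \<partial>N)" by simp
    have "(\<integral>\<omega>. (s1 \<omega> - s0 \<omega>) * Y1 \<omega> \<partial>N) \<le> (\<integral>\<omega>. C * (s1 \<omega> - s0 \<omega>) \<partial>N)"
      using is0 is1 idf ae s01
    proof (intro integral_mono_AE)
      show "AE \<omega> in N. (s1 \<omega> - s0 \<omega>) * Y1 \<omega> \<le> C * (s1 \<omega> - s0 \<omega>)" using ae AE_space
      proof eventually_elim
        case (elim \<omega>) then have "s0 \<omega> \<in> {0,1}" "s1 \<omega> \<in> {0,1}" "s0 \<omega> \<le> s1 \<omega>" using s01 by auto
        then show ?case using elim by auto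
      qed
    qed auto
    then show "(\<integral>\<omega>. s1 \<omega> * Y1 \<omega> \<partial>N) - C * ((\<integral>\<omega>. s1 \<omega> \<partial>N) - (\<integral>\<omega>. s0 \<omega> \<partial>N)) \<le> (\<integral>\<omega>. s0 \<omega> * Y1 \<omega> \<partial>N)"
      using d1 d2 by simp
  qed
qed


theorem corollary1:
  fixes M :: "'a measure" and SX :: "'x measure" and SZ :: "'z measure"
    and X :: "'a \<Rightarrow> 'x" and Z :: "'a \<Rightarrow> 'z"
    and U V Y0s Y1s :: "'a \<Rightarrow> real"
    and P :: "'x \<Rightarrow> 'z \<Rightarrow> real" and Q :: "nat \<Rightarrow> 'x \<Rightarrow> real"
    and K :: "'x \<Rightarrow> real \<Rightarrow> 'a measure"
    and Ystar :: "real set"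
  assumes M: "prob_space M"
    and meas: "X \<in> measurable M SX" "Z \<in> measurable M SZ"
      "U \<in> borel_measurable M" "V \<in> borel_measurable M"
      "Y0s \<in> borel_measurable M" "Y1s \<in> borel_measurable M"
    and P_meas: "(\<lambda>(x, z). P x z) \<in> borel_measurable (SX \<Otimes>\<^sub>M SZ)"
    and P_range: "\<forall>x\<in>space SX. \<forall>z\<in>space SZ. P x z \<in> {0..1}"
    and Q_meas: "\<forall>d\<in>{0,1}. Q d \<in> borel_measurable SX"
    and Q_range: "\<forall>d\<in>{0,1}. \<forall>x\<in>space SX. Q d x \<in> {0..1}"
    and UV_unif: "cond_uniform01 M X SX U" "cond_uniform01 M X SX V"
    and UV_cont: "cond_jointly_continuous M X SX U V"
    and A1: "cond_indep_given M X SX Z SZ (\<lambda>\<omega>. (U \<omega>, V \<omega>, Y0s \<omega>, Y1s \<omega>)) borel"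
    and A2: "cond_nondegenerate M X SX (\<lambda>\<omega>. P (X \<omega>) (Z \<omega>))"
    and A3: "integrable M Y0s" "integrable M Y1s"
      "integrable M (\<lambda>\<omega>. (Y0s \<omega>)\<^sup>2)" "integrable M (\<lambda>\<omega>. (Y1s \<omega>)\<^sup>2)"
    and A4: "AE \<omega> in M. 0 < condE M X SX (Dtr P X Z U) \<omega> \<and> condE M X SX (Dtr P X Z U) \<omega> < 1"
    and A6: "rv_support M Y0s = Ystar" "rv_support M Y1s = Ystar"
    and A8: "\<forall>x\<in>X ` space M. Q 1 x > Q 0 x \<and> Q 0 x > 0"
    and K: "is_rcd M X SX U K"
  shows "AE \<omega> in M.
    (let x = X \<omega>; u = U \<omega>;
         a = mY K Q X V 0 Y0s x u / mS K Q X V 0 x u;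
         DS = mS K Q X V 1 x u - mS K Q X V 0 x u;
         D = DeltaOO K Q X V Y0s Y1s x u
     in mS K Q X V 0 x u \<noteq> 0 \<longrightarrow> pOO K Q X V x u \<noteq> 0 \<longrightarrow>
       ((bdd_below Ystar \<and> \<not> bdd_above Ystar \<and> is_interval Ystar \<longrightarrow>
           Inf Ystar - a \<le> D \<and>
           D \<le> (mY K Q X V 1 Y1s x u - Inf Ystar * DS) / mS K Q X V 0 x u - a) \<and>
        (\<not> bdd_below Ystar \<and> bdd_above Ystar \<and> is_interval Ystar \<longrightarrow>
           (mY K Q X V 1 Y1s x u - Sup Ystar * DS) / mS K Q X V 0 x u - a \<le> D \<and>
           D \<le> Sup Ystar - a) \<and>
        (bdd_below Ystar \<and> bdd_above Ystar \<and>
           (is_interval Ystar \<or> (Inf Ystar \<in> Ystar \<and> Sup Ystar \<in> Ystar)) \<longrightarrow>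
           max ((mY K Q X V 1 Y1s x u - Sup Ystar * DS) / mS K Q X V 0 x u) (Inf Ystar) - a \<le> D \<and>
           D \<le> min ((mY K Q X V 1 Y1s x u - Inf Ystar * DS) / mS K Q X V 0 x u) (Sup Ystar) - a)))"
proof -
  define \<kappa> where "\<kappa> = (\<lambda>\<omega>. K (X \<omega>) (U \<omega>))"
  note km = kernel_meas[OF M meas(1) meas(3) K]
  interpret prob_space M by (rule M)
  have Qm: "Q d \<in> borel_measurable SX" if "d \<in> {0,1}" for d using Q_meas that by auto
  have Sm: "Ssel Q X V d \<in> borel_measurable M" if "d \<in> {0,1}" for d
  proof -
    have "(\<lambda>\<omega>. Q d (X \<omega>)) \<in> borel_measurable M"
      using measurable_compose[OF meas(1) Qm[OF that]] by simp
    then show ?thesis unfolding Ssel_def using meas(4) by measurable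
  qed
  have sets\<kappa>: "sets (\<kappa> \<omega>) = sets M" and ps\<kappa>: "prob_space (\<kappa> \<omega>)" for \<omega>
    using K unfolding is_rcd_def \<kappa>_def by auto
  have space\<kappa>: "space (\<kappa> \<omega>) = space M" for \<omega> using sets\<kappa> by (rule sets_eq_imp_space_eq)
  have I0: "AE \<omega> in M. integrable (\<kappa> \<omega>) Y0s"
    unfolding \<kappa>_def using kernel_integrable[OF M meas(1) meas(3) K A3(1)] .
  have I1: "AE \<omega> in M. integrable (\<kappa> \<omega>) Y1s"
    unfolding \<kappa>_def using kernel_integrable[OF M meas(1) meas(3) K A3(2)] .
  have L: "AE \<omega> in M. bdd_below Ystar \<longrightarrow> (AE \<omega>' in \<kappa> \<omega>. Inf Ystar \<le> Y1s \<omega>')"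
  proof (cases "bdd_below Ystar")
    case True
    have "AE \<omega> in M. Inf Ystar \<le> Y1s \<omega>"
      using supp_lower[OF meas(6)] True A6(2) by simp
    then have "AE \<omega> in M. AE \<omega>' in \<kappa> \<omega>. Inf Ystar \<le> Y1s \<omega>'"
      unfolding \<kappa>_def using meas(6) by (intro kernel_AE[OF M meas(1) meas(3) K]) auto
    then show ?thesis by simp
  qed simp
  have H: "AE \<omega> in M. bdd_above Ystar \<longrightarrow> (AE \<omega>' in \<kappa> \<omega>. Y1s \<omega>' \<le> Sup Ystar)"
  proof (cases "bdd_above Ystar")
    case True
    have "AE \<omega> in M. Y1s \<omega> \<le> Sup Ystar"
      using supp_upper[OF meas(6)] True A6(2) by simp
    then have "AE \<omega> in M. AE \<omega>' in \<kappa> \<omega>. Y1s \<omega>' \<le> Sup Ystar"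
      unfolding \<kappa>_def using meas(6) by (intro kernel_AE[OF M meas(1) meas(3) K]) auto
    then show ?thesis by simp
  qed simp
  show ?thesis using I0 I1 L H
  proof eventually_elim
    case (elim \<omega>)
    let ?N = "\<kappa> \<omega>"
    let ?s0 = "Ssel Q X V 0" and ?s1 = "Ssel Q X V 1"
    have mN: "f \<in> borel_measurable ?N" if "f \<in> borel_measurable M" for f
      using that by (simp add: measurable_cong_sets[OF sets\<kappa> refl])
    have s01: "\<forall>\<omega>'\<in>space ?N. ?s0 \<omega>' \<in> {0,1} \<and> ?s1 \<omega>' \<in> {0,1} \<and> ?s0 \<omega>' \<le> ?s1 \<omega>'"
    proof
      fix \<omega>' assume "\<omega>' \<in> space ?N"
      then have "\<omega>' \<in> space M" by (simp add: space\<kappa>)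
      then have "Q 1 (X \<omega>') > Q 0 (X \<omega>')" using A8 by auto
      then show "?s0 \<omega>' \<in> {0,1} \<and> ?s1 \<omega>' \<in> {0,1} \<and> ?s0 \<omega>' \<le> ?s1 \<omega>'"
        by (auto simp: Ssel_def)
    qed
    note pw = pointwise[OF ps\<kappa>[of \<omega>] mN[OF Sm] mN[OF Sm] mN[OF meas(5)] mN[OF meas(6)]
        elim(1) elim(2) s01, simplified]
    define m0 where "m0 = mS K Q X V 0 (X \<omega>) (U \<omega>)"
    define m1 where "m1 = mS K Q X V 1 (X \<omega>) (U \<omega>)"
    define T where "T = (\<integral>\<omega>'. ?s0 \<omega>' * Y1s \<omega>' \<partial>?N)"
    define R where "R = mY K Q X V 1 Y1s (X \<omega>) (U \<omega>)"
    define a where "a = mY K Q X V 0 Y0s (X \<omega>) (U \<omega>) / m0"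
    have m0e: "m0 = (\<integral>\<omega>'. ?s0 \<omega>' \<partial>?N)" unfolding m0_def mS_def \<kappa>_def by simp
    have m1e: "m1 = (\<integral>\<omega>'. ?s1 \<omega>' \<partial>?N)" unfolding m1_def mS_def \<kappa>_def by simp
    have Re: "R = (\<integral>\<omega>'. ?s1 \<omega>' * Y1s \<omega>' \<partial>?N)" unfolding R_def mY_def \<kappa>_def by simp
    have pOOe: "pOO K Q X V (X \<omega>) (U \<omega>) = m0" using pw(2) unfolding pOO_def m0e \<kappa>_def by simp
    have De: "DeltaOO K Q X V Y0s Y1s (X \<omega>) (U \<omega>) = (T - mY K Q X V 0 Y0s (X \<omega>) (U \<omega>)) / m0"
      unfolding DeltaOO_def pOOe using pw(1) unfolding T_def mY_def \<kappa>_def by simp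
    have m0ge: "0 \<le> m0" using pw(3) m0e by simp
    have lowc: "c * m0 \<le> T \<and> T \<le> R - c * (m1 - m0)" if "AE \<omega>' in ?N. c \<le> Y1s \<omega>'" for c
      using pw(4)[OF that] unfolding m0e m1e Re T_def by simp
    have upc: "T \<le> c * m0 \<and> R - c * (m1 - m0) \<le> T" if "AE \<omega>' in ?N. Y1s \<omega>' \<le> c" for c
      using pw(5)[OF that] unfolding m0e m1e Re T_def by simp
    let ?Dv = "(T - mY K Q X V 0 Y0s (X \<omega>) (U \<omega>)) / m0"
    have FF: "(bdd_below Ystar \<longrightarrow> Inf Ystar - a \<le> ?Dv \<and> ?Dv \<le> (R - Inf Ystar * (m1 - m0)) / m0 - a) \<and>
      (bdd_above Ystar \<longrightarrow> (R - Sup Ystar * (m1 - m0)) / m0 - a \<le> ?Dv \<and> ?Dv \<le> Sup Ystar - a) \<and>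
      (bdd_below Ystar \<and> bdd_above Ystar \<longrightarrow> max ((R - Sup Ystar * (m1 - m0)) / m0) (Inf Ystar) - a \<le> ?Dv \<and>
          ?Dv \<le> min ((R - Inf Ystar * (m1 - m0)) / m0) (Sup Ystar) - a)" if "m0 \<noteq> 0"
    proof -
      have m0p: "0 < m0" using m0ge that by simp
      have Deq: "?Dv = T / m0 - a"
        unfolding a_def by (simp add: diff_divide_distrib)
      have A: "c - a \<le> T / m0 - a" if "c * m0 \<le> T" for c
        using that m0p by (simp add: pos_le_divide_eq)
      have B: "T / m0 - a \<le> c - a" if "T \<le> c * m0" for c
        using that m0p by (simp add: pos_divide_le_eq)
      have C: "T / m0 - a \<le> S / m0 - a" if "T \<le> S" for S
        using that m0p by (simp add: divide_right_mono)
      have D: "S / m0 - a \<le> T / m0 - a" if "S \<le> T" for S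
        using that m0p by (simp add: divide_right_mono)
      have F1: "Inf Ystar - a \<le> ?Dv \<and> ?Dv \<le> (R - Inf Ystar * (m1 - m0)) / m0 - a"
        if bb: "bdd_below Ystar"
      proof -
        have l: "Inf Ystar * m0 \<le> T" "T \<le> R - Inf Ystar * (m1 - m0)"
          using lowc elim(3) bb by auto
        show ?thesis using A[OF l(1)] C[OF l(2)] Deq by simp
      qed
      have F2: "(R - Sup Ystar * (m1 - m0)) / m0 - a \<le> ?Dv \<and> ?Dv \<le> Sup Ystar - a"
        if bb: "bdd_above Ystar"
      proof -
        have l: "T \<le> Sup Ystar * m0" "R - Sup Ystar * (m1 - m0) \<le> T"
          using upc elim(4) bb by auto
        show ?thesis using B[OF l(1)] D[OF l(2)] Deq by simp
      qed
      have F3: "max ((R - Sup Ystar * (m1 - m0)) / m0) (Inf Ystar) - a \<le> ?Dv \<and>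
          ?Dv \<le> min ((R - Inf Ystar * (m1 - m0)) / m0) (Sup Ystar) - a"
        if bb: "bdd_below Ystar" "bdd_above Ystar"
      proof -
        have l: "Inf Ystar * m0 \<le> T" "T \<le> R - Inf Ystar * (m1 - m0)"
             "T \<le> Sup Ystar * m0" "R - Sup Ystar * (m1 - m0) \<le> T"
          using lowc upc elim(3,4) bb by auto
        have "max ((R - Sup Ystar * (m1 - m0)) / m0) (Inf Ystar) - a \<le> T / m0 - a"
          using A[OF l(1)] D[OF l(4)] by (simp add: max_def)
        moreover have "T / m0 - a \<le> min ((R - Inf Ystar * (m1 - m0)) / m0) (Sup Ystar) - a"
          using C[OF l(2)] B[OF l(3)] by (simp add: min_def)
        ultimately show ?thesis using Deq by simp
      qed
      show ?thesis using F1 F2 F3 by blast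
    qed
    show ?case
      unfolding Let_def m0_def[symmetric] m1_def[symmetric] R_def[symmetric] a_def[symmetric] De
      using FF by (intro impI conjI; auto)
  qed
qed

end
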